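(* In the roundabout exploration process described in the context, let $t\in[N]$, let $s=|A(t)|$, and let $1\le i_1<i_2<\dots<i_s\le N$ be the initial states of the agents in $A(t)$ (so $A(t)=\{a_{i_1},\dots,a_{i_s}\}$). Then $[\![i_\ell,i_{\ell+1}[\![\subseteq D_{i_\ell}(t)$ for every $\ell\in[s-1]$, and $[\![i_s,i_1[\![\subseteq D_{i_s}(t)$.
   Context: Let $n\ge 2$ and $k$ be natural numbers, $T$ a tree on an $n$-element vertex set $V$, and $N=2(n-1)$. Fix a root $r$ and a DFS tour of $T$ starting and ending at $r$ that traverses each edge of $T$ exactly twice, giving a cyclic vertex sequence $(v_1,\dots,v_N,v_{N+1})$ with $v_{N+1}=v_1=r$, and tour edges $e_i=\{v_i,v_{i+1}\}$ for $i\in[N]$. For $i,j\in[N]$ the circular interval $[\![i,j]\!]$ is $\{i,i+1,\dots,j\}$ if $i\le j$ and $\{i,\dots,N,1,\dots,j\}$ if $i>j$; $[\![i,j[\![$ denotes $[\![i,j]\!]\setminus\{j\}$. Let $\langle G_1,\dots,G_N\rangle$ be graphs on $V$, each containing all but at most $k$ edges of $T$. Roundabout exploration process: agents $a_1,\dots,a_N$ with initial states $s_i(0)=i$. For steps $t=1,\dots,N$: (Movement) for every $i\in[N]$, if $s_i(t-1)=q$ then $s_i(t)=(q\bmod N)+1$ if $e_q\in E(G_t)$, and $s_i(t)=q$ otherwise. Let $D_i(t)=[\![i,s_i(t)]\!]$ and $D_i(0)=\{i\}$. (Elimination) $A(0)=\{a_1,\dots,a_N\}$; $A(t)$ is obtained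 from $A(t-1)$ by repeatedly removing an arbitrary agent $a_i$ of the current set with $D_i(t)\subseteq\bigcup D_j(t)$ over the other agents $a_j$ of the current set, until no such agent remains. *)

theory Defs
  imports Main
begin

definition is_graph :: "'a set \<Rightarrow> 'a set set \<Rightarrow> bool" where
  "is_graph V E \<longleftrightarrow> (\<forall>e\<in>E. \<exists>x y. x \<in> V \<and> y \<in> V \<and> x \<noteq> y \<and> e = {x, y})"

definition is_walk :: "'a set set \<Rightarrow> 'a list \<Rightarrow> bool" where
  "is_walk E ws \<longleftrightarrow> ws \<noteq> [] \<and> (\<forall>i. Suc i < length ws \<longrightarrow> {ws ! i, ws ! Suc i} \<in> E)"

definition connected_graph :: "'a set \<Rightarrow> 'a set set \<Rightarrow> bool" where
  "connected_graph V E \<longleftrightarrow>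
     (\<forall>x\<in>V. \<forall>y\<in>V. \<exists>ws. is_walk E ws \<and> hd ws = x \<and> last ws = y)"

definition is_cycle :: "'a set set \<Rightarrow> 'a list \<Rightarrow> bool" where
  "is_cycle E cs \<longleftrightarrow> length cs \<ge> 3 \<and> distinct cs \<and> is_walk E cs \<and> {last cs, hd cs} \<in> E"

definition is_tree :: "'a set \<Rightarrow> 'a set set \<Rightarrow> bool" where
  "is_tree V E \<longleftrightarrow> finite V \<and> is_graph V E \<and> connected_graph V E \<and> (\<nexists>cs. is_cycle E cs)"

text \<open>Closed walk v_1,...,v_{N+1} (N = 2(card V - 1)) starting and ending at the root r that
  traverses every tree edge exactly twice (in a tree this is exactly a DFS tour).\<close>
definition dfs_tour :: "'a set \<Rightarrow> 'a set set \<Rightarrow> 'a \<Rightarrow> (nat \<Rightarrow> 'a) \<Rightarrow> bool" where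
  "dfs_tour V E r v \<longleftrightarrow>
     (let N = 2 * (card V - 1) in
       r \<in> V \<and> v 1 = r \<and> v (N + 1) = r \<and>
       (\<forall>i\<in>{1..N}. {v i, v (Suc i)} \<in> E) \<and>
       (\<forall>e\<in>E. card {i\<in>{1..N}. {v i, v (Suc i)} = e} = 2))"

definition tour_edge :: "(nat \<Rightarrow> 'a) \<Rightarrow> nat \<Rightarrow> 'a set" where
  "tour_edge v i = {v i, v (Suc i)}"

definition cint :: "nat \<Rightarrow> nat \<Rightarrow> nat \<Rightarrow> nat set" where
  "cint N i j = (if i \<le> j then {i..j} else {i..N} \<union> {1..j})"

definition cint_ho :: "nat \<Rightarrow> nat \<Rightarrow> nat \<Rightarrow> nat set" where
  "cint_ho N i j = cint N i j - {j}"

fun state :: "nat \<Rightarrow> (nat \<Rightarrow> 'a) \<Rightarrow> (nat \<Rightarrow> 'a set set) \<Rightarrow> nat \<Rightarrow> nat \<Rightarrow> nat" where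
  "state N v G i 0 = i"
| "state N v G i (Suc t) =
     (let q = state N v G i t in
        if tour_edge v q \<in> G (Suc t) then q mod N + 1 else q)"

definition Dset :: "nat \<Rightarrow> (nat \<Rightarrow> 'a) \<Rightarrow> (nat \<Rightarrow> 'a set set) \<Rightarrow> nat \<Rightarrow> nat \<Rightarrow> nat set" where
  "Dset N v G i t = (if t = 0 then {i} else cint N i (state N v G i t))"

definition elim_step :: "(nat \<Rightarrow> nat set) \<Rightarrow> nat set \<Rightarrow> nat set \<Rightarrow> bool" where
  "elim_step D S S' \<longleftrightarrow>
     (\<exists>i\<in>S. D i \<subseteq> (\<Union>j\<in>S - {i}. D j) \<and> S' = S - {i})"

definition elim_done :: "(nat \<Rightarrow> nat set) \<Rightarrow> nat set \<Rightarrow> bool" where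
  "elim_done D S \<longleftrightarrow> (\<forall>i\<in>S. \<not> D i \<subseteq> (\<Union>j\<in>S - {i}. D j))"

definition elim_result :: "(nat \<Rightarrow> nat set) \<Rightarrow> nat set \<Rightarrow> nat set \<Rightarrow> bool" where
  "elim_result D S S' \<longleftrightarrow> (elim_step D)\<^sup>*\<^sup>* S S' \<and> elim_done D S'"

text \<open>A (as sets of initial states of surviving agents) is a valid run of the process\<close>
definition valid_run :: "nat \<Rightarrow> (nat \<Rightarrow> 'a) \<Rightarrow> (nat \<Rightarrow> 'a set set) \<Rightarrow> (nat \<Rightarrow> nat set) \<Rightarrow> bool" where
  "valid_run N v G A \<longleftrightarrow>
     A 0 = {1..N} \<and>
     (\<forall>t\<in>{1..N}. elim_result (\<lambda>i. Dset N v G i t) (A (t - 1)) (A t))"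

end

theory Submission
  imports Defs
begin

fun mv :: "nat \<Rightarrow> (nat \<Rightarrow> 'a) \<Rightarrow> (nat \<Rightarrow> 'a set set) \<Rightarrow> nat \<Rightarrow> nat \<Rightarrow> nat" where
  "mv N v G i 0 = 0"
| "mv N v G i (Suc t) = mv N v G i t + (if tour_edge v (state N v G i t) \<in> G (Suc t) then 1 else 0)"

definition off :: "nat \<Rightarrow> nat \<Rightarrow> nat \<Rightarrow> nat" where
  "off N a j = (j + N - a) mod N"

lemma off_eq: "1 \<le> a \<Longrightarrow> a \<le> N \<Longrightarrow> 1 \<le> j \<Longrightarrow> j \<le> N \<Longrightarrow>
   off N a j = (if a \<le> j then j - a else j + N - a)"
proof -
  assume h: "1 \<le> a" "a \<le> N" "1 \<le> j" "j \<le> N"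
  show ?thesis
  proof (cases "a \<le> j")
    case True
    then have "j + N - a = (j - a) + N" by simp
    then have "(j + N - a) mod N = (j - a) mod N" by simp
    also have "\<dots> = j - a" using h True by simp
    finally show ?thesis using True by (simp add: off_def)
  next
    case False
    then show ?thesis using h by (simp add: off_def)
  qed
qed

lemma state_mv: "0 < N \<Longrightarrow> 1 \<le> i \<Longrightarrow> i \<le> N \<Longrightarrow>
  state N v G i t = ((i + mv N v G i t - 1) mod N) + 1"
proof (induction t)
  case 0
  then show ?case by simp
next
  case (Suc t)
  have e: "(((i + mv N v G i t - 1) mod N) + 1) mod N + 1 = ((i + mv N v G i t) mod N) + 1"
  proof -
    have "(((i + mv N v G i t - 1) mod N) + 1) mod N = ((i + mv N v G i t - 1) + 1) mod N"
      by (simp add: mod_Suc_eq)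
    also have "\<dots> = (i + mv N v G i t) mod N" using Suc.prems by simp
    finally show ?thesis by simp
  qed
  show ?case using Suc e by (simp add: Let_def)
qed

lemma mv_le: "mv N v G i t \<le> t"
  by (induction t) auto

lemma mv_Suc_le: "mv N v G i (Suc t) \<le> Suc (mv N v G i t)"
  by simp

lemma mv_mono: "mv N v G i t \<le> mv N v G i (Suc t)"
  by simp

lemma no_overtake:
  assumes "0 < N" "1 \<le> a" "a \<le> b" "b \<le> N"
  shows "a + mv N v G a t \<le> b + mv N v G b t \<and> b + mv N v G b t \<le> a + mv N v G a t + N"
proof (induction t)
  case 0
  then show ?case using assms by simp
next
  case (Suc t)
  define X where "X = a + mv N v G a t"
  define Y where "Y = b + mv N v G b t"
  have sa: "state N v G a t = ((X - 1) mod N) + 1" using state_mv[of N a v G t] assms X_def by simp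
  have sb: "state N v G b t = ((Y - 1) mod N) + 1" using state_mv[of N b v G t] assms Y_def by simp
  have X1: "X \<ge> 1" using assms X_def by simp
  have h1: "X \<le> Y" "Y \<le> X + N" using Suc X_def Y_def by auto
  have c1: "X = Y \<Longrightarrow> state N v G a t = state N v G b t" using sa sb by simp
  have c2: "Y = X + N \<Longrightarrow> state N v G a t = state N v G b t"
  proof -
    assume "Y = X + N"
    then have "Y - 1 = (X - 1) + N" using X1 by simp
    then show ?thesis using sa sb by simp
  qed
  define da where "da = (if tour_edge v (state N v G a t) \<in> G (Suc t) then 1 else (0::nat))"
  define db where "db = (if tour_edge v (state N v G b t) \<in> G (Suc t) then 1 else (0::nat))"
  have A: "a + mv N v G a (Suc t) = X + da" using X_def da_def by simp
  have B: "b + mv N v G b (Suc t) = Y + db" using Y_def db_def by simp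
  have d1: "da \<le> 1" "db \<le> 1" using da_def db_def by auto
  have d2: "X = Y \<Longrightarrow> da = db" using c1 da_def db_def by simp
  have d3: "Y = X + N \<Longrightarrow> da = db" using c2 da_def db_def by simp
  have g1: "X + da \<le> Y + db"
  proof (cases "X = Y")
    case True then show ?thesis using d2 by simp
  next
    case False then show ?thesis using h1 d1 by linarith
  qed
  have g2: "Y + db \<le> X + da + N"
  proof (cases "Y = X + N")
    case True then show ?thesis using d3 by simp
  next
    case False then show ?thesis using h1 d1 by linarith
  qed
  show ?case unfolding A B using g1 g2 by simp
qed

lemma no_overtake_off:
  assumes "0 < N" "1 \<le> a" "a \<le> N" "1 \<le> c" "c \<le> N"
  shows "mv N v G a t \<le> off N a c + mv N v G c t \<and> off N a c + mv N v G c t \<le> N + mv N v G a t"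
proof (cases "a \<le> c")
  case True
  have "off N a c = c - a" using True assms off_eq[of a N c] by simp
  then show ?thesis using no_overtake[of N a c v G t] assms True by linarith
next
  case False
  have "off N a c = c + N - a" using False assms off_eq[of a N c] by simp
  then show ?thesis using no_overtake[of N c a v G t] assms False by linarith
qed

lemma cint_sub: "1 \<le> a \<Longrightarrow> s \<le> N \<Longrightarrow> cint N a s \<subseteq> {1..N}"
  by (auto simp: cint_def)

lemma cint_mem: "1 \<le> a \<Longrightarrow> a \<le> N \<Longrightarrow> 1 \<le> s \<Longrightarrow> s \<le> N \<Longrightarrow> 1 \<le> j \<Longrightarrow> j \<le> N \<Longrightarrow>
   j \<in> cint N a s \<longleftrightarrow> off N a j \<le> off N a s"
  by (auto simp: cint_def off_eq)

lemma off_state: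
  assumes "1 \<le> a" "a \<le> N" "m < N"
  shows "off N a ((a + m - 1) mod N + 1) = m \<and> 1 \<le> (a + m - 1) mod N + 1 \<and> (a + m - 1) mod N + 1 \<le> N"
proof (cases "a + m - 1 < N")
  case True
  then show ?thesis using assms off_eq[of a N "a+m"] by simp
next
  case False
  have "(a + m - 1) mod N = a + m - 1 - N"
    using False assms by (simp add: mod_if le_mod_geq)
  then have e: "(a + m - 1) mod N + 1 = a + m - N" using False assms by linarith
  have q: "\<not> a \<le> a + m - N" "1 \<le> a + m - N" "a + m - N \<le> N" using assms False by linarith+
  have "off N a (a + m - N) = m" using assms q off_eq[of a N "a + m - N"] by simp
  then show ?thesis unfolding e using q by simp
qed

lemma Dset_mem:
  assumes "0 < N" "1 \<le> a" "a \<le> N" "1 \<le> t" "mv N v G a t < N" "1 \<le> j" "j \<le> N"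
  shows "j \<in> Dset N v G a t \<longleftrightarrow> off N a j \<le> mv N v G a t"
proof -
  have s: "state N v G a t = ((a + mv N v G a t - 1) mod N) + 1" using state_mv assms by blast
  have o: "off N a (state N v G a t) = mv N v G a t" "1 \<le> state N v G a t" "state N v G a t \<le> N"
    using off_state[of a N "mv N v G a t"] assms unfolding s by blast+
  have d: "Dset N v G a t = cint N a (state N v G a t)" using assms(4) by (simp add: Dset_def)
  show ?thesis unfolding d using cint_mem[of a N "state N v G a t" j] o assms by simp
qed

lemma Dset_sub:
  assumes "0 < N" "1 \<le> a" "a \<le> N"
  shows "Dset N v G a t \<subseteq> {1..N}"
proof (cases "t = 0")
  case True then show ?thesis using assms by (simp add: Dset_def)
next
  case False
  have s: "state N v G a t = ((a + mv N v G a t - 1) mod N) + 1" using state_mv assms by blast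
  have "(a + mv N v G a t - 1) mod N < N" using assms by simp
  then have "state N v G a t \<le> N" unfolding s by linarith
  then have "cint N a (state N v G a t) \<subseteq> {1..N}" using cint_sub[of a "state N v G a t" N] assms by blast
  then show ?thesis using False unfolding Dset_def by simp
qed

lemma elim_step_props: "elim_step D S S' \<Longrightarrow> S' \<subseteq> S \<and> (\<Union>(D ` S')) = (\<Union>(D ` S))"
proof -
  assume "elim_step D S S'"
  then obtain i where i: "i \<in> S" "D i \<subseteq> (\<Union>j\<in>S - {i}. D j)" "S' = S - {i}"
    unfolding elim_step_def by blast
  have "S = insert i S'" using i by auto
  then have "(\<Union>(D ` S)) = D i \<union> (\<Union>(D ` S'))" by simp
  also have "\<dots> = (\<Union>(D ` S'))" using i by auto
  finally show ?thesis using i by auto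
qed

lemma elim_rt_props: "(elim_step D)\<^sup>*\<^sup>* S S' \<Longrightarrow> S' \<subseteq> S \<and> (\<Union>(D ` S')) = (\<Union>(D ` S))"
proof (induction rule: rtranclp_induct)
  case base then show ?case by simp
next
  case (step y z)
  have "z \<subseteq> y \<and> (\<Union>(D ` z)) = (\<Union>(D ` y))" using elim_step_props[of D y z] step(2) by simp
  then show ?case using step(3) by (metis order_trans)
qed

lemma valid_run_step:
  assumes "valid_run N v G A" "Suc t \<le> N"
  shows "elim_result (\<lambda>i. Dset N v G i (Suc t)) (A t) (A (Suc t))"
proof -
  have "Suc t \<in> {1..N}" using assms(2) by simp
  then have "elim_result (\<lambda>i. Dset N v G i (Suc t)) (A (Suc t - 1)) (A (Suc t))"
    using assms(1) unfolding valid_run_def by blast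
  then show ?thesis by simp
qed

lemma A_sub:
  assumes "valid_run N v G A" shows "t \<le> N \<Longrightarrow> A t \<subseteq> {1..N}"
proof (induction t)
  case 0 then show ?case using assms by (simp add: valid_run_def)
next
  case (Suc t)
  have "elim_result (\<lambda>i. Dset N v G i (Suc t)) (A t) (A (Suc t))"
    using valid_run_step[OF assms Suc.prems] .
  then have "A (Suc t) \<subseteq> A t" using elim_rt_props unfolding elim_result_def by blast
  then show ?case using Suc by simp
qed

lemma A_step:
  assumes "valid_run N v G A" "Suc t \<le> N"
  shows "A (Suc t) \<subseteq> A t \<and> (\<Union>i\<in>A (Suc t). Dset N v G i (Suc t)) = (\<Union>i\<in>A t. Dset N v G i (Suc t))
     \<and> elim_done (\<lambda>i. Dset N v G i (Suc t)) (A (Suc t))"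
proof -
  have "elim_result (\<lambda>i. Dset N v G i (Suc t)) (A t) (A (Suc t))"
    using valid_run_step[OF assms] .
  then show ?thesis using elim_rt_props[of "\<lambda>i. Dset N v G i (Suc t)" "A t" "A (Suc t)"]
    unfolding elim_result_def by blast
qed

lemma nofull:
  assumes N2: "N \<ge> 2" and vr: "valid_run N v G A" and st: "Suc t \<le> N"
    and c2: "2 \<le> card (A (Suc t))" and c: "c \<in> A t"
  shows "mv N v G c (Suc t) < N"
proof (rule ccontr)
  assume "\<not> mv N v G c (Suc t) < N"
  then have eq: "mv N v G c (Suc t) = N" using mv_le[of N v G c "Suc t"] st by simp
  have tN: "Suc t = N" using eq mv_le[of N v G c "Suc t"] st by simp
  have mt: "mv N v G c t = t" using eq tN mv_le[of N v G c t] mv_Suc_le[of N v G c t] by simp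
  have t1: "1 \<le> t" using tN N2 by simp
  have As: "A t \<subseteq> {1..N}" using A_sub[OF vr] st by simp
  then have cr: "1 \<le> c" "c \<le> N" using c by auto
  have full: "{1..N} \<subseteq> Dset N v G c t"
  proof
    fix j assume j: "j \<in> {1..N}"
    have "off N c j < N" unfolding off_def using N2 by simp
    then have "off N c j \<le> mv N v G c t" using mt tN by simp
    then show "j \<in> Dset N v G c t" using Dset_mem[of N c t v G j] N2 cr t1 mt tN j by simp
  qed
  have tt: "Suc (t - 1) = t" using t1 by simp
  have hdone: "elim_done (\<lambda>i. Dset N v G i t) (A t)"
    using A_step[OF vr, of "t - 1"] st unfolding tt by simp
  have single: "A t \<subseteq> {c}"
  proof
    fix b assume b: "b \<in> A t"
    show "b \<in> {c}"
    proof (rule ccontr)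
      assume "b \<notin> {c}"
      then have "c \<in> A t - {b}" using c by simp
      moreover have "1 \<le> b" "b \<le> N" using b As by auto
      moreover have "Dset N v G b t \<subseteq> {1..N}" using Dset_sub[of N b v G t] calculation(2,3) N2 by simp
      ultimately have "Dset N v G b t \<subseteq> (\<Union>j\<in>A t - {b}. Dset N v G j t)" using full by blast
      then show False using hdone b unfolding elim_done_def by blast
    qed
  qed
  have "A (Suc t) \<subseteq> {c}" using single A_step[OF vr st] by blast
  then have "card (A (Suc t)) \<le> card {c}" by (intro card_mono) auto
  then have "card (A (Suc t)) \<le> 1" by simp
  then show False using c2 by simp
qed

lemma cover:
  assumes N2: "N \<ge> 2" and vr: "valid_run N v G A"
  shows "t \<le> N \<Longrightarrow> 2 \<le> card (A t) \<Longrightarrow> {1..N} \<subseteq> (\<Union>i\<in>A t. Dset N v G i t)"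
proof (induction t)
  case 0
  then show ?case using vr by (auto simp: valid_run_def Dset_def)
next
  case (Suc t)
  have st: "A (Suc t) \<subseteq> A t" using A_step[OF vr Suc.prems(1)] by simp
  have fin: "finite (A t)" using A_sub[OF vr, of t] Suc.prems finite_subset by auto
  have "card (A (Suc t)) \<le> card (A t)" using card_mono[OF fin st] .
  then have c2: "2 \<le> card (A t)" using Suc.prems by simp
  have As: "A t \<subseteq> {1..N}" using A_sub[OF vr] Suc.prems by simp
  have grow: "Dset N v G i t \<subseteq> Dset N v G i (Suc t)" if i: "i \<in> A t" for i
  proof
    fix j assume j: "j \<in> Dset N v G i t"
    have ir: "1 \<le> i" "i \<le> N" using i As by auto
    have ms: "mv N v G i (Suc t) < N" using nofull[OF N2 vr Suc.prems(1) Suc.prems(2) i] .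
    show "j \<in> Dset N v G i (Suc t)"
    proof (cases "t = 0")
      case True
      then have "j = i" using j by (simp add: Dset_def)
      moreover have "off N i i = 0" by (simp add: off_def)
      ultimately show ?thesis using Dset_mem[of N i "Suc t" v G j] ir ms N2 by simp
    next
      case False
      have mt: "mv N v G i t < N" using ms mv_mono[of N v G i t] by simp
      have jr: "1 \<le> j" "j \<le> N" using j Dset_sub[of N i v G t] ir N2 by auto
      have "off N i j \<le> mv N v G i t" using j Dset_mem[of N i t v G j] ir mt jr N2 False by simp
      then have "off N i j \<le> mv N v G i (Suc t)" using mv_mono[of N v G i t] by simp
      then show ?thesis using Dset_mem[of N i "Suc t" v G j] ir ms jr N2 by simp
    qed
  qed
  have "{1..N} \<subseteq> (\<Union>i\<in>A t. Dset N v G i t)" using Suc c2 by simp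
  also have "\<dots> \<subseteq> (\<Union>i\<in>A t. Dset N v G i (Suc t))" using grow by blast
  also have "\<dots> = (\<Union>i\<in>A (Suc t). Dset N v G i (Suc t))" using A_step[OF vr Suc.prems(1)] by simp
  finally show ?case .
qed

lemma off_add:
  assumes "1 \<le> a" "a \<le> N" "1 \<le> c" "c \<le> N" "1 \<le> j" "j \<le> N" "off N a j < off N a c"
  shows "off N c j + off N a c = off N a j + N"
  using assms off_eq[of a N j] off_eq[of a N c] off_eq[of c N j]
  by (simp split: if_splits)

lemma off_inj:
  assumes "1 \<le> a" "a \<le> N" "1 \<le> b" "b \<le> N" "1 \<le> j" "j \<le> N" "off N a j = off N a b"
  shows "j = b"
  using assms off_eq[of a N j] off_eq[of a N b]
  by (simp split: if_splits)

lemma key: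
  assumes N2: "N \<ge> 2" and vr: "valid_run N v G A" and t: "t \<in> {1..N}"
    and a: "a \<in> A t" and b: "b \<in> A t" and ab: "a \<noteq> b"
    and gap: "\<forall>c\<in>A t. c \<noteq> a \<longrightarrow> off N a b \<le> off N a c"
  shows "cint_ho N a b \<subseteq> Dset N v G a t"
proof
  fix j assume j: "j \<in> cint_ho N a b"
  have As: "A t \<subseteq> {1..N}" using A_sub[OF vr] t by simp
  have fin: "finite (A t)" using As finite_subset by auto
  have "card {a, b} \<le> card (A t)" using a b fin by (intro card_mono) auto
  then have c2: "2 \<le> card (A t)" using ab by simp
  have cov: "{1..N} \<subseteq> (\<Union>i\<in>A t. Dset N v G i t)" using cover[OF N2 vr] t c2 by simp
  have tt: "Suc (t - 1) = t" using t by simp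
  have ms: "mv N v G c t < N" if c: "c \<in> A t" for c
  proof -
    have "c \<in> A (t - 1)" using A_step[OF vr, of "t - 1"] c t unfolding tt by auto
    then show ?thesis using nofull[OF N2 vr, of "t - 1" c] c2 t unfolding tt by simp
  qed
  have ar: "1 \<le> a" "a \<le> N" using a As by auto
  have br: "1 \<le> b" "b \<le> N" using b As by auto
  have j1: "j \<in> cint N a b" "j \<noteq> b" using j unfolding cint_ho_def by auto
  have jr: "1 \<le> j" "j \<le> N" using j1(1) cint_sub[of a b N] ar br by auto
  have "off N a j \<le> off N a b" using cint_mem[of a N b j] ar br jr j1 by simp
  moreover have "off N a j \<noteq> off N a b" using off_inj[of a N b j] ar br jr j1 by auto
  ultimately have djb: "off N a j < off N a b" by simp
  have t1: "1 \<le> t" using t by simp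
  have "off N a j \<le> mv N v G a t"
  proof (rule ccontr)
    assume nd: "\<not> off N a j \<le> mv N v G a t"
    obtain c where c: "c \<in> A t" "j \<in> Dset N v G c t" using cov jr by auto
    have cr: "1 \<le> c" "c \<le> N" using c As by auto
    have mc: "off N c j \<le> mv N v G c t" using Dset_mem[of N c t v G j] c cr jr ms[OF c(1)] N2 t1 by simp
    have ca: "c \<noteq> a" using mc nd by auto
    have u: "off N a b \<le> off N a c" using gap c ca by auto
    have ov: "off N a c + mv N v G c t \<le> N + mv N v G a t"
      using no_overtake_off[of N a c v G t] ar cr N2 by simp
    have "off N c j + off N a c = off N a j + N" using off_add[of a N c j] ar cr jr djb u by simp
    then show False using ov mc nd by linarith
  qed
  then show "j \<in> Dset N v G a t" using Dset_mem[of N a t v G j] ar jr ms[OF a] N2 t1 by simp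
qed

lemma cint_ho_self: "cint_ho N x x = {}"
  by (simp add: cint_ho_def cint_def)

theorem lemma10:
  fixes V :: "'a set" and E :: "'a set set" and r :: 'a and v :: "nat \<Rightarrow> 'a"
    and G :: "nat \<Rightarrow> 'a set set" and A :: "nat \<Rightarrow> nat set" and n k N t :: nat
  assumes "n \<ge> 2" and "card V = n"
    and "is_tree V E"
    and "N = 2 * (n - 1)"
    and "dfs_tour V E r v"
    and "\<And>t. t \<in> {1..N} \<Longrightarrow> is_graph V (G t) \<and> card (E - G t) \<le> k"
    and "valid_run N v G A"
    and "t \<in> {1..N}"
  shows "let xs = sorted_list_of_set (A t); s = length xs in
           (\<forall>l\<in>{1..s - 1}. cint_ho N (xs ! (l - 1)) (xs ! l) \<subseteq> Dset N v G (xs ! (l - 1)) t) \<and>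
           cint_ho N (xs ! (s - 1)) (xs ! 0) \<subseteq> Dset N v G (xs ! (s - 1)) t"
proof -
  have N2: "N \<ge> 2" using assms(1,4) by simp
  note vr = assms(7) and t = assms(8)
  have As: "A t \<subseteq> {1..N}" using A_sub[OF vr] t by simp
  have fin: "finite (A t)" using As finite_subset by auto
  define xs where "xs = sorted_list_of_set (A t)"
  define s where "s = length xs"
  have setxs: "set xs = A t" using fin xs_def by simp
  have srt: "sorted_wrt (<) xs" using xs_def by simp
  have lt: "\<And>p q. p < q \<Longrightarrow> q < s \<Longrightarrow> xs ! p < xs ! q"
    using srt s_def by (simp add: sorted_wrt_iff_nth_less)
  have le: "\<And>p q. p \<le> q \<Longrightarrow> q < s \<Longrightarrow> xs ! p \<le> xs ! q"
    using lt by (metis le_less)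
  have mem: "\<And>p. p < s \<Longrightarrow> xs ! p \<in> A t" using setxs s_def by auto
  have ex: "\<And>c. c \<in> A t \<Longrightarrow> \<exists>p<s. c = xs ! p" using setxs s_def by (metis in_set_conv_nth)
  have rng: "1 \<le> xs ! p \<and> xs ! p \<le> N" if "p < s" for p
  proof -
    have "xs ! p \<in> {1..N}" using mem[OF that] As by blast
    then show ?thesis by simp
  qed
  have P1: "cint_ho N (xs ! (l - 1)) (xs ! l) \<subseteq> Dset N v G (xs ! (l - 1)) t" if l: "l \<in> {1..s - 1}" for l
  proof -
    have l1: "l - 1 < l" "l < s" using l by auto
    define a where "a = xs ! (l - 1)"
    define b where "b = xs ! l"
    have ab: "a < b" using lt[OF l1] a_def b_def by simp
    have ar: "1 \<le> a" "a \<le> N" using rng[of "l - 1"] l1 a_def by auto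
    have br: "1 \<le> b" "b \<le> N" using rng[of l] l1 b_def by auto
    have gap: "\<forall>c\<in>A t. c \<noteq> a \<longrightarrow> off N a b \<le> off N a c"
    proof (intro ballI impI)
      fix c assume c: "c \<in> A t" "c \<noteq> a"
      obtain p where p: "p < s" "c = xs ! p" using ex c by blast
      have cr: "1 \<le> c" "c \<le> N" using rng p by auto
      have ob: "off N a b = b - a" using off_eq[of a N b] ar br ab by simp
      show "off N a b \<le> off N a c"
      proof (cases "l \<le> p")
        case True
        then have "b \<le> c" using le[of l p] p b_def by simp
        then show ?thesis using ob off_eq[of a N c] ar cr ab by simp
      next
        case False
        have "p \<noteq> l - 1" using p c a_def by auto
        then have "p < l - 1" using False by linarith
        then have "c < a" using lt[of p "l - 1"] p a_def l1 by simp
        then show ?thesis using ob off_eq[of a N c] ar cr ab br by simp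
      qed
    qed
    show ?thesis
      using key[OF N2 vr t, of a b] mem[of "l - 1"] mem[of l] l1 ab gap a_def b_def by simp
  qed
  have P2: "cint_ho N (xs ! (s - 1)) (xs ! 0) \<subseteq> Dset N v G (xs ! (s - 1)) t"
  proof (cases "s \<le> 1")
    case True
    then have "s - 1 = 0" by simp
    then show ?thesis by (simp add: cint_ho_self)
  next
    case False
    define a where "a = xs ! (s - 1)"
    define b where "b = xs ! 0"
    have s1: "0 < s - 1" "s - 1 < s" using False by auto
    have ab: "b < a" using lt[OF s1] a_def b_def by simp
    have ar: "1 \<le> a" "a \<le> N" using rng[of "s - 1"] s1 a_def by auto
    have br: "1 \<le> b" "b \<le> N" using rng[of 0] s1 b_def by auto
    have gap: "\<forall>c\<in>A t. c \<noteq> a \<longrightarrow> off N a b \<le> off N a c"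
    proof (intro ballI impI)
      fix c assume c: "c \<in> A t" "c \<noteq> a"
      obtain p where p: "p < s" "c = xs ! p" using ex c by blast
      have cr: "1 \<le> c" "c \<le> N" using rng p by auto
      have "p \<noteq> s - 1" using p c a_def by auto
      then have "c < a" using lt[of p "s - 1"] p a_def s1 by simp
      moreover have "b \<le> c" using le[of 0 p] p b_def by simp
      ultimately show "off N a b \<le> off N a c"
        using off_eq[of a N c] off_eq[of a N b] ar cr ab br by simp
    qed
    show ?thesis
      using key[OF N2 vr t, of a b] mem[of "s - 1"] mem[of 0] s1 ab gap a_def b_def by simp
  qed
  show ?thesis unfolding Let_def xs_def[symmetric] s_def[symmetric] using P1 P2 by blast
qed

end
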